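(* Let $\delta=\ln 3$, let $X\subset\mathbb{H}^n$ be finite with $|X|\le 2^c+2$ for some $c>0$, and let $(T,p)$ be a Gromov approximating tree for $X$. Let $x_1,x_2,x_3\in X$, $\Delta=[x_1x_2x_3]\subset\mathbb{H}^n$ the geodesic triangle, $T_\Delta\subset T$ the tripod spanned by $p(x_1),p(x_2),p(x_3)$ with branch point $o$, and $o_{ij}\in[x_ix_j]$ the internal points of $\Delta$, i.e. the points with $d(x_i,o_{ij})=\frac12\big(d(x_i,x_j)+d(x_i,x_l)-d(x_j,x_l)\big)$ where $\{i,j,l\}=\{1,2,3\}$. Let $p_\Delta:\Delta\to T_\Delta$ be the map that sends $x_i\mapsto p(x_i)$, $o_{ij}\mapsto o$, and maps each segment $[x_io_{ij}]$ onto $[p(x_i)o]$ by the dilation $d_T(p(x_i),p_\Delta(z))=\frac{d_T(p(x_i),o)}{d(x_i,o_{ij})}\,d(x_i,z)$. Then $p_\Delta$ is a $(1,4c\delta+2\delta)$-quasi-isometry, where $\Delta$ carries the metric restricted from $\mathbb{H}^n$.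
   Context: A Gromov approximating tree for a finite $X\subset\mathbb{H}^n$ with $|X|\le 2^c+2$ is a pair $(T,p)$ where $T$ is a finite metric tree and $p:X\to T$ maps $X$ to vertices of $T$ such that every leaf (valence-one vertex) of $T$ lies in $p(X)$, and $d(x_1,x_2)-2c\delta\le d_T(p(x_1),p(x_2))\le d(x_1,x_2)$ for all $x_1,x_2\in X$, with $\delta=\ln 3$. Maps $f:X\to Y$ is an $(L,A)$-quasi-isometry if $-A+\frac1L d_X(a,b)\le d_Y(f(a),f(b))\le Ld_X(a,b)+A$ for all $a,b$, and there is $\bar f:Y\to X$ satisfying the analogous inequalities with $d_X(a,\bar f f(a))\le A$ and $d_Y(y,f\bar f(y))\le A$ for all $a\in X,y\in Y$. *)

theory Defs
  imports "HOL-Analysis.Analysis"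
begin

definition geodesic_path :: "('a \<Rightarrow> 'a \<Rightarrow> real) \<Rightarrow> 'a set \<Rightarrow> (real \<Rightarrow> 'a) \<Rightarrow> 'a \<Rightarrow> 'a \<Rightarrow> bool" where
  "geodesic_path d S \<gamma> a b \<longleftrightarrow>
     \<gamma> 0 = a \<and> \<gamma> (d a b) = b \<and> \<gamma> ` {0..d a b} \<subseteq> S \<and>
     (\<forall>s\<in>{0..d a b}. \<forall>t\<in>{0..d a b}. d (\<gamma> s) (\<gamma> t) = \<bar>s - t\<bar>)"

text \<open>The geodesic segment [a b] (union of images of all geodesics from a to b;
  in uniquely geodesic spaces this is the unique geodesic segment).\<close>
definition gseg :: "('a \<Rightarrow> 'a \<Rightarrow> real) \<Rightarrow> 'a set \<Rightarrow> 'a \<Rightarrow> 'a \<Rightarrow> 'a set" where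
  "gseg d S a b = (\<Union>\<gamma>\<in>{\<gamma>. geodesic_path d S \<gamma> a b}. \<gamma> ` {0..d a b})"

definition hyp_space :: "(real^'n) set" where
  "hyp_space = ball 0 1"

definition hdist :: "real^'n \<Rightarrow> real^'n \<Rightarrow> real" where
  "hdist x y = arcosh (1 + 2 * (norm (x - y))^2 / ((1 - (norm x)^2) * (1 - (norm y)^2)))"

definition hseg :: "real^'n \<Rightarrow> real^'n \<Rightarrow> (real^'n) set" where
  "hseg a b = gseg hdist hyp_space a b"

definition geod_triangle :: "real^'n \<Rightarrow> real^'n \<Rightarrow> real^'n \<Rightarrow> (real^'n) set" where
  "geod_triangle x1 x2 x3 = hseg x1 x2 \<union> hseg x2 x3 \<union> hseg x1 x3"

definition real_tree :: "'b::metric_space set \<Rightarrow> bool" where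
  "real_tree T \<longleftrightarrow>
     (\<forall>a\<in>T. \<forall>b\<in>T. \<exists>\<gamma>. geodesic_path dist T \<gamma> a b) \<and>
     (\<forall>a\<in>T. \<forall>b\<in>T. \<forall>\<gamma>1 \<gamma>2. geodesic_path dist T \<gamma>1 a b \<and> geodesic_path dist T \<gamma>2 a b
         \<longrightarrow> (\<forall>t\<in>{0..dist a b}. \<gamma>1 t = \<gamma>2 t)) \<and>
     (\<forall>a\<in>T. \<forall>b\<in>T. \<forall>c\<in>T. gseg dist T a b \<inter> gseg dist T b c = {b}
         \<longrightarrow> gseg dist T a b \<union> gseg dist T b c = gseg dist T a c)"

definition valence :: "'b::metric_space set \<Rightarrow> 'b \<Rightarrow> nat" where
  "valence T v = card (components (T - {v}))"

definition finite_metric_tree :: "'b::metric_space set \<Rightarrow> 'b set \<Rightarrow> bool" where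
  "finite_metric_tree T V \<longleftrightarrow>
     real_tree T \<and> T \<noteq> {} \<and>
     (\<exists>F. finite F \<and> F \<subseteq> T \<and> T = (\<Union>a\<in>F. \<Union>b\<in>F. gseg dist T a b)) \<and>
     finite V \<and> V \<subseteq> T \<and> {v\<in>T. valence T v \<noteq> 2} \<subseteq> V"

definition tripod :: "'b::metric_space set \<Rightarrow> 'b \<Rightarrow> 'b \<Rightarrow> 'b \<Rightarrow> 'b set" where
  "tripod T a b c = gseg dist T a b \<union> gseg dist T b c \<union> gseg dist T a c"

definition gromov_approx_tree ::
  "real \<Rightarrow> (real^'n) set \<Rightarrow> 'b::metric_space set \<Rightarrow> 'b set \<Rightarrow> (real^'n \<Rightarrow> 'b) \<Rightarrow> bool" where
  "gromov_approx_tree c X T V p \<longleftrightarrow>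
     finite_metric_tree T V \<and> p ` X \<subseteq> V \<and>
     {v\<in>T. valence T v = 1} \<subseteq> p ` X \<and>
     (\<forall>x1\<in>X. \<forall>x2\<in>X. hdist x1 x2 - 2 * c * ln 3 \<le> dist (p x1) (p x2) \<and>
                      dist (p x1) (p x2) \<le> hdist x1 x2)"

definition quasi_isometry ::
  "('a \<Rightarrow> 'a \<Rightarrow> real) \<Rightarrow> 'a set \<Rightarrow> ('b \<Rightarrow> 'b \<Rightarrow> real) \<Rightarrow> 'b set \<Rightarrow> ('a \<Rightarrow> 'b) \<Rightarrow> real \<Rightarrow> real \<Rightarrow> bool" where
  "quasi_isometry dX X dY Y f L A \<longleftrightarrow>
     f ` X \<subseteq> Y \<and>
     (\<forall>a\<in>X. \<forall>b\<in>X. - A + dX a b / L \<le> dY (f a) (f b) \<and> dY (f a) (f b) \<le> L * dX a b + A) \<and>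
     (\<exists>g. g ` Y \<subseteq> X \<and>
        (\<forall>y\<in>Y. \<forall>y'\<in>Y. - A + dY y y' / L \<le> dX (g y) (g y') \<and> dX (g y) (g y') \<le> L * dY y y' + A) \<and>
        (\<forall>a\<in>X. dX a (g (f a)) \<le> A) \<and> (\<forall>y\<in>Y. dY y (f (g y)) \<le> A))"

definition dilation_on_seg ::
  "(real^'n \<Rightarrow> 'b::metric_space) \<Rightarrow> 'b set \<Rightarrow> real^'n \<Rightarrow> real^'n \<Rightarrow> 'b \<Rightarrow> 'b \<Rightarrow> bool" where
  "dilation_on_seg pD T xi oij pxi ob \<longleftrightarrow>
     (\<forall>z\<in>hseg xi oij. pD z \<in> gseg dist T pxi ob \<and>
        dist pxi (pD z) = dist pxi ob / hdist xi oij * hdist xi z)"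

end

theory Submission
  imports Defs
begin


definition lor :: "real \<times> (real^'n) \<Rightarrow> real \<times> (real^'n) \<Rightarrow> real" where
  "lor P Q = fst P * fst Q - inner (snd P) (snd Q)"

lemma lor_sym: "lor P Q = lor Q P"
  by (simp add: lor_def inner_commute mult.commute)
lemma lor_add_left: "lor (P + Q) R = lor P R + lor Q R"
  by (simp add: lor_def inner_add_left algebra_simps)
lemma lor_add_right: "lor R (P + Q) = lor R P + lor R Q"
  by (simp add: lor_def inner_add_right algebra_simps)
lemma lor_diff_left: "lor (P - Q) R = lor P R - lor Q R"
  by (simp add: lor_def inner_diff_left algebra_simps)
lemma lor_diff_right: "lor R (P - Q) = lor R P - lor R Q"
  by (simp add: lor_def inner_diff_right algebra_simps)
lemma lor_scale_left: "lor (c *\<^sub>R P) R = c * lor P R"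
  by (simp add: lor_def algebra_simps)
lemma lor_scale_right: "lor R (c *\<^sub>R P) = c * lor R P"
  by (simp add: lor_def algebra_simps)

lemmas lor_simps = lor_add_left lor_add_right lor_diff_left lor_diff_right lor_scale_left lor_scale_right

lemma perp_spacelike:
  assumes Q: "fst Q > 0" "lor Q Q = 1" and N: "lor N Q = 0"
  shows "lor N N \<le> 0" "lor N N = 0 \<Longrightarrow> N = 0"
proof -
  obtain t v where Nd: "N = (t, v)" by (cases N)
  obtain s w where Qd: "Q = (s, w)" by (cases Q)
  have QQ: "lor Q Q = s^2 - (norm w)^2" by (simp add: Qd lor_def power2_eq_square dot_square_norm)
  have s: "s > 0" "s^2 - (norm w)^2 = 1" using Q QQ by (auto simp: Qd)
  have ts: "t * s = inner v w" using N by (simp add: Nd Qd lor_def)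
  have "(t * s)^2 \<le> (norm v * norm w)^2"
    unfolding ts using Cauchy_Schwarz_ineq[of v w] by (simp add: power_mult_distrib power2_norm_eq_inner)
  hence 1: "t^2 * s^2 \<le> (norm v)^2 * (s^2 - 1)" using s by (simp add: power_mult_distrib) (metis add_diff_cancel_left' diff_add_cancel)
  hence 2: "s^2 * (t^2 - (norm v)^2) \<le> - ((norm v)^2)" by (simp add: algebra_simps)
  have ss: "s^2 > 0" using s by simp
  have NN: "lor N N = t^2 - (norm v)^2" by (simp add: Nd lor_def power2_eq_square dot_square_norm)
  have "s^2 * (t^2 - (norm v)^2) \<le> 0" using 2 by (smt (verit) zero_le_power2)
  thus "lor N N \<le> 0" unfolding NN using ss by (simp add: mult_le_0_iff)
  assume "lor N N = 0"
  hence "(norm v)^2 \<le> 0" using 2 NN by simp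
  hence "(norm v)^2 = 0" by (meson antisym zero_le_power2)
  hence "norm v = 0" by simp
  hence "v = 0" by simp
  hence "t = 0" using ts s by simp
  thus "N = 0" using \<open>v = 0\<close> by (simp add: Nd zero_prod_def)
qed

lemma lor_CS:
  assumes Q: "fst Q > 0" "lor Q Q = 1" and U: "lor U Q = 0" and W: "lor W Q = 0"
  shows "(lor U W)^2 \<le> lor U U * lor W W"
proof (cases "lor W W = 0")
  case True
  hence "W = 0" using perp_spacelike(2)[OF Q W] by simp
  thus ?thesis by (simp add: lor_def)
next
  case False
  hence neg: "lor W W < 0" using perp_spacelike(1)[OF Q W] by simp
  define x where "x = - lor U W / lor W W"
  have "lor (U + x *\<^sub>R W) Q = 0" using U W by (simp add: lor_simps)
  hence "lor (U + x *\<^sub>R W) (U + x *\<^sub>R W) \<le> 0" using perp_spacelike(1)[OF Q] by blast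
  hence "lor U U + 2 * x * lor U W + x^2 * lor W W \<le> 0"
    by (simp add: lor_simps lor_sym[of W U] power2_eq_square algebra_simps)
  hence "lor U U - (lor U W)^2 / lor W W \<le> 0" using neg
    by (simp add: x_def power2_eq_square field_simps)
  hence "lor U U * lor W W - (lor U W)^2 \<ge> 0" using neg
    by (simp add: field_simps)
  thus ?thesis by simp
qed

definition lift :: "real^'n \<Rightarrow> real \<times> (real^'n)" where
  "lift x = ((1 + (norm x)^2) / (1 - (norm x)^2), (2 / (1 - (norm x)^2)) *\<^sub>R x)"

lemma ball_norm: "x \<in> hyp_space \<Longrightarrow> (norm x)^2 < 1"
  by (simp add: hyp_space_def abs_square_less_1)

lemma lor_lift_aux:
  fixes a b c :: real assumes "1 - a > 0" "1 - b > 0"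
  shows "(1+a)/(1-a)*((1+b)/(1-b)) - 2/(1-a)*(2/(1-b))*c = 1 + 2*(a+b-2*c)/((1-a)*(1-b))"
proof -
  have "1 - a \<noteq> 0" "1 - b \<noteq> 0" using assms by auto
  thus ?thesis by (simp add: divide_simps) (simp add: algebra_simps)
qed

lemma lor_lift:
  assumes "x \<in> hyp_space" "y \<in> hyp_space"
  shows "lor (lift x) (lift y) = 1 + 2 * (norm (x - y))^2 / ((1 - (norm x)^2) * (1 - (norm y)^2))"
proof -
  have a: "1 - (norm x)^2 > 0" "1 - (norm y)^2 > 0" using ball_norm assms by auto
  have n: "(norm (x - y))^2 = (norm x)^2 + (norm y)^2 - 2 * inner x y"
    by (simp add: power2_norm_eq_inner inner_diff inner_commute)
  have "lor (lift x) (lift y) = (1+(norm x)^2)/(1-(norm x)^2)*((1+(norm y)^2)/(1-(norm y)^2))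
         - 2/(1-(norm x)^2)*(2/(1-(norm y)^2))*inner x y"
    by (simp add: lift_def lor_def)
  also have "\<dots> = 1 + 2 * (norm (x - y))^2 / ((1 - (norm x)^2) * (1 - (norm y)^2))"
    unfolding n by (rule lor_lift_aux[OF a])
  finally show ?thesis .
qed

lemma lor_lift_ge1:
  assumes "x \<in> hyp_space" "y \<in> hyp_space"
  shows "lor (lift x) (lift y) \<ge> 1"
proof -
  have a: "1 - (norm x)^2 > 0" "1 - (norm y)^2 > 0" using ball_norm assms by auto
  thus ?thesis unfolding lor_lift[OF assms] by simp
qed

lemma hdist_lor: "x \<in> hyp_space \<Longrightarrow> y \<in> hyp_space \<Longrightarrow> hdist x y = arcosh (lor (lift x) (lift y))"
  by (simp add: hdist_def lor_lift)

lemma cosh_hdist: "x \<in> hyp_space \<Longrightarrow> y \<in> hyp_space \<Longrightarrow> cosh (hdist x y) = lor (lift x) (lift y)"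
  by (simp add: hdist_lor lor_lift_ge1)

lemma hdist_nonneg: "x \<in> hyp_space \<Longrightarrow> y \<in> hyp_space \<Longrightarrow> hdist x y \<ge> 0"
  by (simp add: hdist_lor lor_lift_ge1)

lemma hdist_sym: "hdist x y = hdist y x"
  by (simp add: hdist_def norm_minus_commute mult.commute)

lemma hdist_refl: "hdist x x = 0"
  by (simp add: hdist_def)

lemma hdist_zero: assumes "x \<in> hyp_space" "y \<in> hyp_space" "hdist x y = 0" shows "x = y"
proof -
  have a: "1 - (norm x)^2 > 0" "1 - (norm y)^2 > 0" using ball_norm assms by auto
  have "lor (lift x) (lift y) = 1" using assms lor_lift_ge1[OF assms(1,2)] by (simp add: hdist_lor)
  hence "2 * (norm (x - y))^2 / ((1 - (norm x)^2) * (1 - (norm y)^2)) = 0" unfolding lor_lift[OF assms(1,2)] by simp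
  hence "(norm (x - y))^2 = 0" using a by simp
  thus ?thesis by simp
qed

lemma lift_H: assumes "x \<in> hyp_space" shows "fst (lift x) > 0" "lor (lift x) (lift x) = 1"
proof -
  have a: "1 - (norm x)^2 > 0" using ball_norm assms by auto
  have b: "1 + (norm x)^2 > 0" by (simp add: add_pos_nonneg)
  show "fst (lift x) > 0" using a b by (simp add: lift_def)
  show "lor (lift x) (lift x) = 1" using lor_lift[OF assms assms] by simp
qed

lemma lift_inj: assumes "x \<in> hyp_space" "y \<in> hyp_space" "lift x = lift y" shows "x = y"
proof -
  have "hdist x y = arcosh (lor (lift x) (lift x))" using assms by (simp add: hdist_lor)
  also have "\<dots> = 0" using lift_H[OF assms(1)] by simp
  finally show ?thesis using hdist_zero assms by blast
qed

lemma cosh_sq: "cosh (x::real) * cosh x = 1 + sinh x * sinh x"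
  using cosh_square_eq[of x] by (simp add: power2_eq_square)

lemma hdist_triangle:
  assumes "x \<in> hyp_space" "y \<in> hyp_space" "z \<in> hyp_space"
  shows "hdist x z \<le> hdist x y + hdist y z"
proof -
  define P Q R where "P = lift x" "Q = lift y" "R = lift z"
  define a b where "a = hdist x y" "b = hdist y z"
  have PQ: "lor P Q = cosh a" "lor Q R = cosh b" using assms by (simp_all add: P_Q_R_def a_b_def cosh_hdist)
  have HP: "lor P P = 1" "lor Q Q = 1" "lor R R = 1" "fst Q > 0" using lift_H assms by (auto simp: P_Q_R_def)
  define U W where "U = P - cosh a *\<^sub>R Q" "W = R - cosh b *\<^sub>R Q"
  have U0: "lor U Q = 0" using PQ HP by (simp add: U_W_def lor_simps)
  have W0: "lor W Q = 0" using PQ HP by (simp add: U_W_def lor_simps lor_sym[of R Q])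
  have UU: "lor U U = - (sinh a ^ 2)"
    using PQ HP by (simp add: U_W_def lor_simps lor_sym[of Q P] cosh_sq power2_eq_square algebra_simps)
  have WW: "lor W W = - (sinh b ^ 2)"
    using PQ HP by (simp add: U_W_def lor_simps lor_sym[of R Q] cosh_sq power2_eq_square algebra_simps)
  have UW: "lor U W = lor P R - cosh a * cosh b"
    using PQ HP by (simp add: U_W_def lor_simps lor_sym[of Q P] algebra_simps)
  have "(lor U W)^2 \<le> (sinh a * sinh b)^2"
    using lor_CS[OF HP(4) HP(2) U0 W0] UU WW by (simp add: power_mult_distrib)
  moreover have "sinh a * sinh b \<ge> 0" using hdist_nonneg[of x y] hdist_nonneg[of y z] assms by (simp add: a_b_def)
  ultimately have "lor U W \<le> sinh a * sinh b" by (rule power2_le_imp_le)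
  hence "cosh (hdist x z) \<le> cosh (a + b)" using assms UW by (simp add: P_Q_R_def cosh_hdist cosh_add)
  moreover have nn: "0 \<le> hdist x z" "0 \<le> a + b" using hdist_nonneg[of x z] hdist_nonneg[of x y] hdist_nonneg[of y z] assms by (auto simp: a_b_def)
  ultimately show ?thesis using cosh_real_nonneg_le_iff[OF nn] by (simp add: a_b_def)
qed




lemma sinh_e: "sinh (x::real) = (exp x - 1 / exp x) / 2"
  by (simp add: sinh_field_def exp_minus inverse_eq_divide)
lemma cosh_e: "cosh (x::real) = (exp x + 1 / exp x) / 2"
  by (simp add: cosh_field_def exp_minus inverse_eq_divide)

lemma thin_identity_aux:
  fixes a b c :: real assumes "a > 0" "b > 0" "c > 0"
  shows "((a - 1/a)/2)*((b - 1/b)/2) + ((a - 1/a)/2)*((c - 1/c)/2)*((b*c + 1/(b*c))/2)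
       + ((c - 1/c)/2)*((b - 1/b)/2)*((a*c + 1/(a*c))/2) + ((c - 1/c)/2)*((c - 1/c)/2)*((a*b + 1/(a*b))/2)
       = ((a*c - 1/(a*c))/2)*((b*c - 1/(b*c))/2) + 2*((c - 1/c)/2)*((c - 1/c)/2)*((a - 1/a)/2)*((b - 1/b)/2)"
  using assms by (simp add: field_simps)

lemma thin_identity:
  fixes u v t :: real
  shows "sinh u * sinh v + sinh u * sinh t * cosh (v + t) + sinh t * sinh v * cosh (u + t) + sinh t * sinh t * cosh (u + v)
       = sinh (u + t) * sinh (v + t) + 2 * sinh t * sinh t * sinh u * sinh v"
  using thin_identity_aux[of "exp u" "exp v" "exp t"]
  by (simp add: sinh_e cosh_e exp_add mult.commute)

lemma exp_sinh_le: fixes u t :: real assumes "0 \<le> t" shows "exp t * sinh u \<le> sinh (u + t)"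
proof -
  have s: "sinh (u + t) = sinh u * cosh t + cosh u * sinh t" by (rule sinh_add)
  have e: "exp t = cosh t + sinh t" by (rule cosh_plus_sinh[symmetric])
  have "sinh (u + t) - exp t * sinh u = sinh t * (cosh u - sinh u)"
    unfolding s e by (simp add: algebra_simps)
  moreover have "sinh t * (cosh u - sinh u) \<ge> 0" using assms sinh_le_cosh_real[of u] by simp
  ultimately show ?thesis by simp
qed

lemma sinh_le_exp_half: "sinh (t::real) \<le> exp t / 2"
  by (simp add: sinh_e)

lemma thin_num:
  fixes A B C t :: real
  assumes "0 < t" "t \<le> A" "t \<le> B" "0 \<le> C" "C \<le> A + B - 2*t"
  shows "sinh (A-t) * sinh (B-t) + sinh (A-t) * sinh t * cosh B + sinh t * sinh (B-t) * cosh A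
          + sinh t * sinh t * cosh C \<le> 3/2 * (sinh A * sinh B)"
proof -
  define u v where "u = A - t" "v = B - t"
  have uv: "u \<ge> 0" "v \<ge> 0" "A = u + t" "B = v + t" using assms by (auto simp: u_v_def)
  have "cosh C \<le> cosh (u + v)" using assms uv cosh_real_nonneg_le_iff[of C "u+v"] by simp
  hence 1: "sinh t * sinh t * cosh C \<le> sinh t * sinh t * cosh (u + v)"
    by (simp add: mult_left_mono)
  have st: "0 \<le> sinh t" "0 \<le> sinh u" "0 \<le> sinh v" using assms uv by auto
  have e1: "exp t * sinh u \<le> sinh (u + t)" "exp t * sinh v \<le> sinh (v + t)" using assms exp_sinh_le[of t u] exp_sinh_le[of t v] by auto
  have e2: "sinh t * sinh t \<le> (exp t / 2) * (exp t / 2)"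
    by (rule mult_mono[OF sinh_le_exp_half sinh_le_exp_half]) (use st in auto)
  have "2 * sinh t * sinh t * sinh u * sinh v = 2 * (sinh t * sinh t) * (sinh u * sinh v)" by simp
  also have "\<dots> \<le> 2 * ((exp t / 2) * (exp t / 2)) * (sinh u * sinh v)"
  proof -
    have h: "2 * (sinh t * sinh t) \<le> 2 * ((exp t / 2) * (exp t / 2))" using e2 by simp
    show ?thesis using mult_right_mono[OF h, of "sinh u * sinh v"] st by simp
  qed
  also have "\<dots> = 1/2 * ((exp t * sinh u) * (exp t * sinh v))" by simp
  also have "\<dots> \<le> 1/2 * (sinh (u + t) * sinh (v + t))"
    using e1 st by (simp add: mult_mono)
  finally have 2: "2 * sinh t * sinh t * sinh u * sinh v \<le> 1/2 * (sinh (u + t) * sinh (v + t))" .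
  have "sinh (A-t) * sinh (B-t) + sinh (A-t) * sinh t * cosh B + sinh t * sinh (B-t) * cosh A
          + sinh t * sinh t * cosh C \<le> sinh u * sinh v + sinh u * sinh t * cosh (v + t) + sinh t * sinh v * cosh (u + t) + sinh t * sinh t * cosh (u + v)"
    using 1 unfolding uv(3) uv(4) by simp
  also have "\<dots> = sinh (u + t) * sinh (v + t) + 2 * sinh t * sinh t * sinh u * sinh v"
    by (rule thin_identity)
  also have "\<dots> \<le> 3/2 * (sinh A * sinh B)" using 2 unfolding uv(3) uv(4) by simp
  finally show ?thesis .
qed

lemma geo_lift:
  assumes H: "x \<in> hyp_space" "y \<in> hyp_space" "z \<in> hyp_space"
    and d: "hdist x z = s" "hdist z y = D - s" "hdist x y = D" "D > 0"
  shows "lift z = (sinh (D - s) / sinh D) *\<^sub>R lift x + (sinh s / sinh D) *\<^sub>R lift y"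
proof -
  define P R Z where "P = lift x" "R = lift y" "Z = lift z"
  define \<alpha> \<beta> where "\<alpha> = sinh (D - s) / sinh D" "\<beta> = sinh s / sinh D"
  have sD: "sinh D > 0" using d by simp
  have lZP: "lor Z P = cosh s" using H d cosh_hdist[of z x] by (simp add: P_R_Z_def hdist_sym)
  have lZR: "lor Z R = cosh (D - s)" using H d cosh_hdist[of z y] by (simp add: P_R_Z_def)
  have lPR: "lor P R = cosh D" using H d cosh_hdist[of x y] by (simp add: P_R_Z_def)
  have lRP: "lor R P = cosh D" using lPR lor_sym by metis
  have HP: "lor P P = 1" "lor R R = 1" "lor Z Z = 1" "fst P > 0" using lift_H H by (auto simp: P_R_Z_def)
  have e1: "sinh (D-s) + sinh s * cosh D = sinh D * cosh s" by (simp add: sinh_diff algebra_simps)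
  have "sinh (D-s) * cosh D + sinh s - sinh D * cosh (D-s) = sinh s * (1 + sinh D * sinh D - cosh D * cosh D)"
    by (simp add: sinh_diff cosh_diff algebra_simps)
  hence e2: "sinh (D-s) * cosh D + sinh s = sinh D * cosh (D-s)" by (simp add: cosh_sq)
  have e3: "sinh (D-s) * cosh s + sinh s * cosh (D-s) = sinh D"
    using sinh_add[of "D-s" s] by (simp add: mult.commute)
  have i1: "\<alpha> + \<beta> * cosh D = cosh s"
  proof -
    have "\<alpha> + \<beta> * cosh D = (sinh (D-s) + sinh s * cosh D) / sinh D" by (simp add: \<alpha>_\<beta>_def add_divide_distrib)
    thus ?thesis using e1 sD by simp
  qed
  have i2: "\<alpha> * cosh D + \<beta> = cosh (D - s)"
  proof -
    have "\<alpha> * cosh D + \<beta> = (sinh (D-s) * cosh D + sinh s) / sinh D" by (simp add: \<alpha>_\<beta>_def add_divide_distrib)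
    thus ?thesis using e2 sD by simp
  qed
  have i3: "\<alpha> * cosh s + \<beta> * cosh (D - s) = 1"
  proof -
    have "\<alpha> * cosh s + \<beta> * cosh (D - s) = (sinh (D-s) * cosh s + sinh s * cosh (D-s)) / sinh D" by (simp add: \<alpha>_\<beta>_def add_divide_distrib)
    thus ?thesis using e3 sD by simp
  qed
  define W where "W = \<alpha> *\<^sub>R P + \<beta> *\<^sub>R R"
  have WP: "lor W P = cosh s" using HP lRP i1 by (simp add: W_def lor_simps)
  have WR: "lor W R = cosh (D - s)" using HP lPR i2 by (simp add: W_def lor_simps)
  have WW: "lor W W = 1" using WP WR i3 by (simp add: W_def lor_simps lor_sym[of P W] lor_sym[of R W])
  have ZW: "lor Z W = 1" using lZP lZR i3 by (simp add: W_def lor_simps)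
  have NP: "lor (Z - W) P = 0" using lZP WP by (simp add: lor_simps)
  have NN: "lor (Z - W) (Z - W) = 0" using HP WW ZW by (simp add: lor_simps lor_sym[of W Z])
  have "Z - W = 0" using perp_spacelike(2)[OF HP(4) HP(1) NP NN] .
  thus ?thesis by (simp add: P_R_Z_def W_def \<alpha>_\<beta>_def)
qed

lemma cosh_ln3: "cosh (ln 3 :: real) = 5/3"
  by (simp add: cosh_ln_real)

lemma thin:
  assumes H: "x \<in> hyp_space" "y \<in> hyp_space" "z \<in> hyp_space" "a \<in> hyp_space" "b \<in> hyp_space"
    and da: "hdist x a = t" "hdist a y = hdist x y - t"
    and db: "hdist x b = t" "hdist b z = hdist x z - t"
    and t: "0 \<le> t" "2 * t \<le> hdist x y + hdist x z - hdist y z"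
  shows "hdist a b \<le> ln 3"
proof (cases "t = 0")
  case True
  hence "a = x" "b = x" using hdist_zero[of x a] hdist_zero[of x b] H da db by auto
  thus ?thesis by (simp add: hdist_refl)
next
  case False
  hence tp: "t > 0" using t by simp
  define A B C where "A = hdist x y" "B = hdist x z" "C = hdist y z"
  have tA: "t \<le> A" using hdist_nonneg[of a y] H da by (simp add: A_B_C_def)
  have tB: "t \<le> B" using hdist_nonneg[of b z] H db by (simp add: A_B_C_def)
  have C0: "0 \<le> C" using hdist_nonneg[of y z] H by (simp add: A_B_C_def)
  have sA: "sinh A > 0" "sinh B > 0" using tA tB tp by auto
  have La: "lift a = (sinh (A - t) / sinh A) *\<^sub>R lift x + (sinh t / sinh A) *\<^sub>R lift y"
    by (rule geo_lift) (use H da tA tp in \<open>auto simp: A_B_C_def\<close>)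
  have Lb: "lift b = (sinh (B - t) / sinh B) *\<^sub>R lift x + (sinh t / sinh B) *\<^sub>R lift z"
    by (rule geo_lift) (use H db tB tp in \<open>auto simp: A_B_C_def\<close>)
  have l: "lor (lift x) (lift x) = 1" "lor (lift x) (lift z) = cosh B" "lor (lift y) (lift x) = cosh A"
     "lor (lift y) (lift z) = cosh C"
    using H lift_H cosh_hdist[of x z] cosh_hdist[of y x] cosh_hdist[of y z] by (auto simp: A_B_C_def hdist_sym)
  have "lor (lift a) (lift b) = (sinh (A-t) * sinh (B-t) + sinh (A-t) * sinh t * cosh B + sinh t * sinh (B-t) * cosh A
          + sinh t * sinh t * cosh C) / (sinh A * sinh B)"
    unfolding La Lb using l sA by (simp add: lor_simps field_simps)
  also have "\<dots> \<le> 3/2" using thin_num[OF tp tA tB C0] t sA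
    by (simp add: A_B_C_def divide_le_eq mult_pos_pos)
  finally have "cosh (hdist a b) \<le> cosh (ln 3)" using H cosh_hdist[of a b] cosh_ln3 by simp
  thus ?thesis using cosh_real_nonneg_le_iff[of "hdist a b" "ln 3"] hdist_nonneg[of a b] H by simp
qed




section \<open>Generic geodesic facts\<close>

lemma geo_dist:
  assumes "geodesic_path d S \<gamma> a b" "0 \<le> s" "s \<le> d a b"
  shows "d a (\<gamma> s) = s" "d (\<gamma> s) b = d a b - s" "\<gamma> s \<in> S"
proof -
  have g: "\<gamma> 0 = a" "\<gamma> (d a b) = b" "\<gamma> ` {0..d a b} \<subseteq> S"
    "\<forall>s\<in>{0..d a b}. \<forall>t\<in>{0..d a b}. d (\<gamma> s) (\<gamma> t) = \<bar>s - t\<bar>"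
    using assms(1) unfolding geodesic_path_def by auto
  have "d (\<gamma> 0) (\<gamma> s) = \<bar>0 - s\<bar>" using g(4) assms by auto
  thus "d a (\<gamma> s) = s" using g assms by simp
  have "d (\<gamma> s) (\<gamma> (d a b)) = \<bar>s - d a b\<bar>" using g(4) assms by auto
  thus "d (\<gamma> s) b = d a b - s" using g assms by simp
  show "\<gamma> s \<in> S" using g assms by auto
qed

lemma geo_dist2:
  assumes "geodesic_path d S \<gamma> a b" "0 \<le> s" "s \<le> d a b" "0 \<le> t" "t \<le> d a b"
  shows "d (\<gamma> s) (\<gamma> t) = \<bar>s - t\<bar>"
  using assms unfolding geodesic_path_def by auto

lemma geo_restrict:
  assumes "geodesic_path d S \<gamma> a b" "0 \<le> s0" "s0 \<le> d a b"
  shows "geodesic_path d S \<gamma> a (\<gamma> s0)"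
proof -
  have e: "d a (\<gamma> s0) = s0" using geo_dist[OF assms] by simp
  show ?thesis using assms unfolding geodesic_path_def e by auto
qed

lemma geo_reverse_sub:
  assumes "geodesic_path d S \<gamma> a b" "0 \<le> s0" "s0 \<le> d a b"
  shows "geodesic_path d S (\<lambda>v. \<gamma> (d a b - v)) b (\<gamma> s0)"
proof -
  have g: "\<gamma> 0 = a" "\<gamma> (d a b) = b" "\<gamma> ` {0..d a b} \<subseteq> S"
    "\<forall>s\<in>{0..d a b}. \<forall>t\<in>{0..d a b}. d (\<gamma> s) (\<gamma> t) = \<bar>s - t\<bar>"
    using assms(1) unfolding geodesic_path_def by auto
  have e: "d b (\<gamma> s0) = d a b - s0"
  proof -
    have "d (\<gamma> (d a b)) (\<gamma> s0) = \<bar>d a b - s0\<bar>" using g(4) assms by auto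
    thus ?thesis using g assms by simp
  qed
  show ?thesis unfolding geodesic_path_def e
  proof (intro conjI ballI)
    show "\<gamma> (d a b - 0) = b" using g by simp
    show "\<gamma> (d a b - (d a b - s0)) = \<gamma> s0" by simp
    show "(\<lambda>v. \<gamma> (d a b - v)) ` {0..d a b - s0} \<subseteq> S" using g(3) assms by auto
    fix s t assume "s \<in> {0..d a b - s0}" "t \<in> {0..d a b - s0}"
    thus "d (\<gamma> (d a b - s)) (\<gamma> (d a b - t)) = \<bar>s - t\<bar>" using g(4) assms by (auto simp: abs_minus_commute)
  qed
qed

lemma in_gseg: "geodesic_path d S \<gamma> a b \<Longrightarrow> 0 \<le> s \<Longrightarrow> s \<le> d a b \<Longrightarrow> \<gamma> s \<in> gseg d S a b"
  unfolding gseg_def by auto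

lemma gseg_E:
  assumes "y \<in> gseg d S a b"
  obtains \<gamma> s where "geodesic_path d S \<gamma> a b" "0 \<le> s" "s \<le> d a b" "y = \<gamma> s"
  using assms unfolding gseg_def by auto

lemma gseg_sym:
  assumes "y \<in> gseg d S a b" "d b a = d a b"
  shows "y \<in> gseg d S b a"
proof -
  obtain \<gamma> s where g: "geodesic_path d S \<gamma> a b" "0 \<le> s" "s \<le> d a b" "y = \<gamma> s" using gseg_E[OF assms(1)] by blast
  have "geodesic_path d S (\<lambda>v. \<gamma> (d a b - v)) b (\<gamma> 0)" using geo_reverse_sub[OF g(1), of 0] g by simp
  moreover have "\<gamma> 0 = a" using g(1) unfolding geodesic_path_def by simp
  ultimately have r: "geodesic_path d S (\<lambda>v. \<gamma> (d a b - v)) b a" by simp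
  have "y = (\<lambda>v. \<gamma> (d a b - v)) (d a b - s)" using g by simp
  thus ?thesis using in_gseg[OF r, of "d a b - s"] g assms(2) by simp
qed

lemma gseg_dist:
  assumes "y \<in> gseg d S a b"
  shows "d a y + d y b = d a b" "0 \<le> d a y" "d a y \<le> d a b" "y \<in> S"
proof -
  obtain \<gamma> s where g: "geodesic_path d S \<gamma> a b" "0 \<le> s" "s \<le> d a b" "y = \<gamma> s" using gseg_E[OF assms(1)] by blast
  show "d a y + d y b = d a b" "0 \<le> d a y" "d a y \<le> d a b" "y \<in> S" using geo_dist[OF g(1-3)] g(2-4) by auto
qed




section \<open>Trees\<close>

lemma tree_uniq:
  assumes "real_tree T" "a \<in> T" "b \<in> T" "geodesic_path dist T \<gamma>1 a b" "geodesic_path dist T \<gamma>2 a b"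
    "0 \<le> t" "t \<le> dist a b"
  shows "\<gamma>1 t = \<gamma>2 t"
  using assms unfolding real_tree_def by auto

lemma tree_same_seg:
  assumes T: "real_tree T" "a \<in> T" "b \<in> T" and y: "y \<in> gseg dist T a b" "y' \<in> gseg dist T a b"
  shows "dist y y' = \<bar>dist a y - dist a y'\<bar>"
proof -
  obtain \<gamma> s where g: "geodesic_path dist T \<gamma> a b" "0 \<le> s" "s \<le> dist a b" "y = \<gamma> s" using gseg_E[OF y(1)] by blast
  obtain \<gamma>' s' where g': "geodesic_path dist T \<gamma>' a b" "0 \<le> s'" "s' \<le> dist a b" "y' = \<gamma>' s'" using gseg_E[OF y(2)] by blast
  have "y' = \<gamma> s'" using tree_uniq[OF T g'(1) g(1) g'(2,3)] g' by simp
  hence "dist y y' = \<bar>s - s'\<bar>" using geo_dist2[OF g(1) g(2,3) g'(2,3)] g by simp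
  moreover have "dist a y = s" "dist a y' = s'" using geo_dist[OF g(1) g(2,3)] geo_dist[OF g(1) g'(2,3)] g \<open>y' = \<gamma> s'\<close> by auto
  ultimately show ?thesis by simp
qed

lemma tree_two_legs:
  assumes T: "real_tree T" "a \<in> T" "c \<in> T" and ob: "ob \<in> gseg dist T a c"
    and y: "y \<in> gseg dist T a ob" "y' \<in> gseg dist T c ob"
  shows "dist y y' = (dist a ob - dist a y) + (dist c ob - dist c y')"
proof -
  obtain \<tau> s0 where t: "geodesic_path dist T \<tau> a c" "0 \<le> s0" "s0 \<le> dist a c" "ob = \<tau> s0" using gseg_E[OF ob] by blast
  have oT: "ob \<in> T" using gseg_dist(4)[OF ob] .
  have ao: "dist a ob = s0" "dist c ob = dist a c - s0" using geo_dist[OF t(1-3)] t(4) by (auto simp: dist_commute)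
  have r1: "geodesic_path dist T \<tau> a ob" using geo_restrict[OF t(1-3)] t(4) by simp
  have r2: "geodesic_path dist T (\<lambda>v. \<tau> (dist a c - v)) c ob" using geo_reverse_sub[OF t(1-3)] t(4) by simp
  obtain \<sigma> u where s: "geodesic_path dist T \<sigma> a ob" "0 \<le> u" "u \<le> dist a ob" "y = \<sigma> u" using gseg_E[OF y(1)] by blast
  obtain \<sigma>' u' where s': "geodesic_path dist T \<sigma>' c ob" "0 \<le> u'" "u' \<le> dist c ob" "y' = \<sigma>' u'" using gseg_E[OF y(2)] by blast
  have yy: "y = \<tau> u" using tree_uniq[OF T(1,2) oT s(1) r1 s(2,3)] s by simp
  have yy': "y' = \<tau> (dist a c - u')" using tree_uniq[OF T(1,3) oT s'(1) r2 s'(2,3)] s' by simp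
  have "dist y y' = \<bar>u - (dist a c - u')\<bar>" unfolding yy yy' using s s' ao by (intro geo_dist2[OF t(1)]) auto
  also have "\<dots> = dist a c - u - u'" using s s' ao by auto
  finally have 1: "dist y y' = dist a c - u - u'" .
  have "dist a y = u" using geo_dist[OF s(1-3)] s by simp
  moreover have "dist c y' = u'" using geo_dist[OF s'(1-3)] s' by simp
  ultimately show ?thesis using 1 ao by simp
qed

lemma tree_split:
  assumes T: "real_tree T" "a \<in> T" "c \<in> T" and ob: "ob \<in> gseg dist T a c" and y: "y \<in> gseg dist T a c"
  shows "y \<in> gseg dist T a ob \<or> y \<in> gseg dist T c ob"
proof -
  obtain \<tau> s0 where t: "geodesic_path dist T \<tau> a c" "0 \<le> s0" "s0 \<le> dist a c" "ob = \<tau> s0" using gseg_E[OF ob] by blast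
  obtain \<sigma> s where s: "geodesic_path dist T \<sigma> a c" "0 \<le> s" "s \<le> dist a c" "y = \<sigma> s" using gseg_E[OF y] by blast
  have ys: "y = \<tau> s" using tree_uniq[OF T s(1) t(1) s(2,3)] s by simp
  have ao: "dist a ob = s0" using geo_dist[OF t(1-3)] t(4) by auto
  show ?thesis
  proof (cases "s \<le> s0")
    case True
    have "\<tau> s \<in> gseg dist T a (\<tau> s0)" using in_gseg[OF geo_restrict[OF t(1-3)], of s] True s ao t by simp
    thus ?thesis using ys t by simp
  next
    case False
    have r2: "geodesic_path dist T (\<lambda>v. \<tau> (dist a c - v)) c (\<tau> s0)" using geo_reverse_sub[OF t(1-3)] .
    have co: "dist c (\<tau> s0) = dist a c - s0" using geo_dist[OF t(1-3)] by (simp add: dist_commute)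
    have "(\<lambda>v. \<tau> (dist a c - v)) (dist a c - s) \<in> gseg dist T c (\<tau> s0)"
      using in_gseg[OF r2, of "dist a c - s"] False s co by simp
    thus ?thesis using ys t by simp
  qed
qed

section \<open>Hyperbolic geodesics\<close>

definition on_geo :: "real^'n \<Rightarrow> real^'n \<Rightarrow> real \<Rightarrow> real^'n \<Rightarrow> bool" where
  "on_geo x y t z \<longleftrightarrow> z \<in> hyp_space \<and> hdist x z = t \<and> hdist z y = hdist x y - t"

lemma on_geo_uniq:
  assumes "x \<in> hyp_space" "y \<in> hyp_space" "on_geo x y t z" "on_geo x y t z'"
  shows "z = z'"
proof -
  have z: "z \<in> hyp_space" "z' \<in> hyp_space" "hdist x z = t" "hdist x z' = t"
    "hdist z y = hdist x y - t" "hdist z' y = hdist x y - t" using assms(3,4) by (auto simp: on_geo_def)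
  have t0: "0 \<le> t" "t \<le> hdist x y" using hdist_nonneg[of x z] hdist_nonneg[of z y] assms z by auto
  show ?thesis
  proof (cases "hdist x y = 0")
    case True
    hence "t = 0" using t0 by simp
    thus ?thesis using hdist_zero[of x z] hdist_zero[of x z'] assms z by auto
  next
    case False
    hence D: "hdist x y > 0" using hdist_nonneg[OF assms(1,2)] by simp
    have "lift z = lift z'"
      using geo_lift[OF assms(1,2) z(1) z(3) z(5) refl D] geo_lift[OF assms(1,2) z(2) z(4) z(6) refl D] by simp
    thus ?thesis using lift_inj z by blast
  qed
qed

lemma hgeo_on_geo:
  assumes "geodesic_path hdist hyp_space \<gamma> x y" "0 \<le> t" "t \<le> hdist x y"
  shows "on_geo x y t (\<gamma> t)"
  using geo_dist[OF assms] by (simp add: on_geo_def)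

lemma on_geo_range:
  assumes "x \<in> hyp_space" "y \<in> hyp_space" "on_geo x y t z"
  shows "0 \<le> t" "t \<le> hdist x y"
  using hdist_nonneg[of x z] hdist_nonneg[of z y] assms by (auto simp: on_geo_def)

lemma on_geo_is_gamma:
  assumes "geodesic_path hdist hyp_space \<gamma> x y" "x \<in> hyp_space" "y \<in> hyp_space" "on_geo x y t z"
  shows "z = \<gamma> t"
  using on_geo_uniq[OF assms(2,3) assms(4) hgeo_on_geo[OF assms(1) on_geo_range[OF assms(2-4)]]] .

lemma on_geo_dist:
  assumes "geodesic_path hdist hyp_space \<gamma> x y" "x \<in> hyp_space" "y \<in> hyp_space"
    "on_geo x y t a" "on_geo x y t' b"
  shows "hdist a b = \<bar>t - t'\<bar>"
proof -
  have "a = \<gamma> t" "b = \<gamma> t'" using on_geo_is_gamma assms by blast+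
  thus ?thesis using geo_dist2[OF assms(1)] on_geo_range[OF assms(2,3,4)] on_geo_range[OF assms(2,3,5)] by simp
qed

lemma on_geo_sym:
  assumes "x \<in> hyp_space" "y \<in> hyp_space" "on_geo x y t a"
  shows "on_geo y x (hdist x y - t) a"
  using assms by (auto simp: on_geo_def hdist_sym)




lemma num1:
  fixes t t' g D :: real
  assumes "0 \<le> t" "t \<le> g" "0 \<le> t'" "t' \<le> g" "g = 0 \<Longrightarrow> D = 0"
  shows "\<bar>\<bar>D / g * t - D / g * t'\<bar> - \<bar>t - t'\<bar>\<bar> \<le> \<bar>D - g\<bar>"
proof (cases "g = 0")
  case True thus ?thesis using assms by simp
next
  case False
  hence gp: "g > 0" using assms by simp
  have "\<bar>\<bar>D / g * t - D / g * t'\<bar> - \<bar>t - t'\<bar>\<bar> \<le> \<bar>(D / g * t - D / g * t') - (t - t')\<bar>" by simp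
  also have "(D / g * t - D / g * t') - (t - t') = (D - g) * ((t - t') / g)" using gp by (simp add: field_simps)
  also have "\<bar>(D - g) * ((t - t') / g)\<bar> = \<bar>D - g\<bar> * \<bar>(t - t') / g\<bar>" by (simp add: abs_mult)
  also have "\<dots> \<le> \<bar>D - g\<bar> * 1"
    using gp assms by (intro mult_left_mono) (auto simp: abs_le_iff divide_le_eq)
  finally show ?thesis by simp
qed

lemma num2:
  fixes t g D :: real
  assumes "0 \<le> t" "t \<le> g" "g = 0 \<Longrightarrow> D = 0"
  shows "\<bar>(D - D / g * t) - (g - t)\<bar> \<le> \<bar>D - g\<bar>"
proof (cases "g = 0")
  case True thus ?thesis using assms by simp
next
  case False
  hence gp: "g > 0" using assms by simp
  have "(D - D / g * t) - (g - t) = (D - g) * (1 - t / g)" using gp by (simp add: field_simps)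
  also have "\<bar>(D - g) * (1 - t / g)\<bar> = \<bar>D - g\<bar> * \<bar>1 - t / g\<bar>" by (simp add: abs_mult)
  also have "\<dots> \<le> \<bar>D - g\<bar> * 1"
    using gp assms by (intro mult_left_mono) (auto simp: abs_le_iff divide_le_eq)
  finally show ?thesis by simp
qed

lemma core:
  fixes xs :: "nat \<Rightarrow> real^'n" and os :: "nat \<Rightarrow> nat \<Rightarrow> real^'n" and ps :: "nat \<Rightarrow> 'b::metric_space"
    and g :: "nat \<Rightarrow> real" and pD :: "real^'n \<Rightarrow> 'b" and ob :: 'b and T :: "'b set" and c :: real
    and Del :: "(real^'n) set" and Tri :: "'b set" and I :: "nat set"
  assumes I: "I = {0,1,2}"
    and c: "c \<ge> 0"
    and tree: "real_tree T"
    and X: "\<And>i. i \<in> I \<Longrightarrow> xs i \<in> hyp_space \<and> pD (xs i) = ps i \<and> ps i \<in> T"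
    and O: "\<And>i j. i \<in> I \<Longrightarrow> j \<in> I \<Longrightarrow> i \<noteq> j \<Longrightarrow> os i j \<in> hseg (xs i) (xs j) \<and> os j i = os i j \<and>
             hdist (xs i) (os i j) = g i \<and> dilation_on_seg pD T (xs i) (os i j) (ps i) ob \<and>
             pD (os i j) = ob \<and> ob \<in> gseg dist T (ps i) (ps j)"
    and Gr: "\<And>i j k. i\<in>I \<Longrightarrow> j\<in>I \<Longrightarrow> k\<in>I \<Longrightarrow> i\<noteq>j \<Longrightarrow> i\<noteq>k \<Longrightarrow> j\<noteq>k \<Longrightarrow>
             2 * g i = hdist (xs i) (xs j) + hdist (xs i) (xs k) - hdist (xs j) (xs k)"
    and App: "\<And>i j. i\<in>I \<Longrightarrow> j\<in>I \<Longrightarrow> hdist (xs i) (xs j) - 2*c*ln 3 \<le> dist (ps i) (ps j) \<and> dist (ps i) (ps j) \<le> hdist (xs i) (xs j)"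
    and Del: "Del = (\<Union>i\<in>I. \<Union>j\<in>I-{i}. hseg (xs i) (xs j))"
    and Tri: "Tri = (\<Union>i\<in>I. \<Union>j\<in>I-{i}. gseg dist T (ps i) (ps j))"
    and img: "pD ` Del \<subseteq> Tri"
  shows "quasi_isometry hdist Del dist Tri pD 1 (4 * c * ln 3 + 2 * ln 3)"
proof -
  define E where "E = 2 * c * ln 3"
  define A0 where "A0 = 4 * c * ln 3 + 2 * ln 3"
  have ln3: "ln (3::real) > 0" by simp
  have E0: "E \<ge> 0" using c ln3 by (simp add: E_def)
  have third: "\<And>i j. i\<in>I \<Longrightarrow> j\<in>I \<Longrightarrow> i\<noteq>j \<Longrightarrow> \<exists>k\<in>I. k\<noteq>i \<and> k\<noteq>j" by (auto simp: I)
  have other: "\<And>i. i\<in>I \<Longrightarrow> \<exists>j\<in>I. j\<noteq>i" by (auto simp: I)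
  have Xh: "\<And>i. i\<in>I \<Longrightarrow> xs i \<in> hyp_space" using X by blast
  have obT: "ob \<in> T"
  proof -
    have "ob \<in> gseg dist T (ps 0) (ps 1)" using O[of 0 1] by (simp add: I)
    thus ?thesis by (rule gseg_dist(4))
  qed
  have osH: "\<And>i j. i\<in>I \<Longrightarrow> j\<in>I \<Longrightarrow> i\<noteq>j \<Longrightarrow> os i j \<in> hyp_space"
  proof -
    fix i j assume ij: "i\<in>I" "j\<in>I" "i\<noteq>j"
    have "os i j \<in> gseg hdist hyp_space (xs i) (xs j)" using O[OF ij] by (simp add: hseg_def)
    thus "os i j \<in> hyp_space" by (rule gseg_dist(4))
  qed
  have gnn: "\<And>i. i\<in>I \<Longrightarrow> 0 \<le> g i"
  proof -
    fix i assume i: "i \<in> I"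
    then obtain j where j: "j \<in> I" "j \<noteq> i" using other by blast
    show "0 \<le> g i" using O[OF i j(1)] j hdist_nonneg[OF Xh[OF i] osH[OF i j(1)]] by auto
  qed
  have gsum: "\<And>i j. i\<in>I \<Longrightarrow> j\<in>I \<Longrightarrow> i\<noteq>j \<Longrightarrow> g i + g j = hdist (xs i) (xs j)"
  proof -
    fix i j assume ij: "i\<in>I" "j\<in>I" "i\<noteq>j"
    then obtain k where k: "k\<in>I" "k\<noteq>i" "k\<noteq>j" using third by blast
    have "2 * g i = hdist (xs i) (xs j) + hdist (xs i) (xs k) - hdist (xs j) (xs k)" using Gr ij k by auto
    moreover have "2 * g j = hdist (xs j) (xs i) + hdist (xs j) (xs k) - hdist (xs i) (xs k)" using Gr ij k by auto
    ultimately show "g i + g j = hdist (xs i) (xs j)" by (simp add: hdist_sym[of "xs j" "xs i"])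
  qed
  have gle: "\<And>i j l. i\<in>I \<Longrightarrow> j\<in>I \<Longrightarrow> l\<in>I \<Longrightarrow> i\<noteq>j \<Longrightarrow> i\<noteq>l \<Longrightarrow>
     2 * g i \<le> hdist (xs i) (xs j) + hdist (xs i) (xs l) - hdist (xs j) (xs l)"
  proof -
    fix i j l assume a: "i\<in>I" "j\<in>I" "l\<in>I" "i\<noteq>j" "i\<noteq>l"
    show "2 * g i \<le> hdist (xs i) (xs j) + hdist (xs i) (xs l) - hdist (xs j) (xs l)"
    proof (cases "j = l")
      case True
      thus ?thesis using gsum[of i j] gnn[of j] a by (simp add: hdist_refl)
    next
      case False thus ?thesis using Gr[of i j l] a by simp
    qed
  qed
  have geo: "\<And>i j. i\<in>I \<Longrightarrow> j\<in>I \<Longrightarrow> i\<noteq>j \<Longrightarrow> \<exists>\<gamma>. geodesic_path hdist hyp_space \<gamma> (xs i) (xs j) \<and> \<gamma> (g i) = os i j"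
  proof -
    fix i j assume ij: "i\<in>I" "j\<in>I" "i\<noteq>j"
    have "os i j \<in> gseg hdist hyp_space (xs i) (xs j)" using O[OF ij] by (simp add: hseg_def)
    then obtain \<gamma> s where gs: "geodesic_path hdist hyp_space \<gamma> (xs i) (xs j)" "0 \<le> s" "s \<le> hdist (xs i) (xs j)" "os i j = \<gamma> s"
      by (rule gseg_E)
    have "hdist (xs i) (os i j) = s" using geo_dist[OF gs(1-3)] gs(4) by simp
    hence "s = g i" using O[OF ij] by simp
    thus "\<exists>\<gamma>. geodesic_path hdist hyp_space \<gamma> (xs i) (xs j) \<and> \<gamma> (g i) = os i j" using gs by (intro exI[of _ \<gamma>]) auto
  qed
  have gleD: "\<And>i j. i\<in>I \<Longrightarrow> j\<in>I \<Longrightarrow> i\<noteq>j \<Longrightarrow> g i \<le> hdist (xs i) (xs j)"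
    using gsum gnn by fastforce
  have legP: "\<And>i j a. i\<in>I \<Longrightarrow> j\<in>I \<Longrightarrow> i\<noteq>j \<Longrightarrow> a \<in> hseg (xs i) (os i j) \<Longrightarrow>
      0 \<le> hdist (xs i) a \<and> hdist (xs i) a \<le> g i \<and> on_geo (xs i) (xs j) (hdist (xs i) a) a \<and>
      pD a \<in> gseg dist T (ps i) ob \<and> dist (ps i) (pD a) = dist (ps i) ob / g i * hdist (xs i) a"
  proof -
    fix i j a assume ij: "i\<in>I" "j\<in>I" "i\<noteq>j" and a: "a \<in> hseg (xs i) (os i j)"
    have a': "a \<in> gseg hdist hyp_space (xs i) (os i j)" using a by (simp add: hseg_def)
    note ga = gseg_dist[OF a']
    have o: "hdist (xs i) (os i j) = g i" using O[OF ij] by simp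
    obtain \<gamma> where \<gamma>: "geodesic_path hdist hyp_space \<gamma> (xs i) (xs j)" "\<gamma> (g i) = os i j" using geo[OF ij] by blast
    have oj: "hdist (os i j) (xs j) = hdist (xs i) (xs j) - g i"
      using geo_dist(2)[OF \<gamma>(1) gnn[OF ij(1)] gleD[OF ij]] \<gamma>(2) by simp
    have H: "xs i \<in> hyp_space" "xs j \<in> hyp_space" "os i j \<in> hyp_space" "a \<in> hyp_space"
      using Xh ij osH ga(4) by auto
    have t1: "hdist a (xs j) \<le> hdist a (os i j) + hdist (os i j) (xs j)" using hdist_triangle H by blast
    have t2: "hdist (xs i) (xs j) \<le> hdist (xs i) a + hdist a (xs j)" using hdist_triangle H by blast
    have og: "on_geo (xs i) (xs j) (hdist (xs i) a) a"
      unfolding on_geo_def using t1 t2 oj ga(1) o H by auto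
    have dil: "dilation_on_seg pD T (xs i) (os i j) (ps i) ob" using O[OF ij] by simp
    show "0 \<le> hdist (xs i) a \<and> hdist (xs i) a \<le> g i \<and> on_geo (xs i) (xs j) (hdist (xs i) a) a \<and>
      pD a \<in> gseg dist T (ps i) ob \<and> dist (ps i) (pD a) = dist (ps i) ob / g i * hdist (xs i) a"
      using ga o og dil a unfolding dilation_on_seg_def by auto
  qed
  have legcover: "\<And>a. a \<in> Del \<Longrightarrow> \<exists>i\<in>I. \<exists>j\<in>I. i \<noteq> j \<and> a \<in> hseg (xs i) (os i j)"
  proof -
    fix a assume "a \<in> Del"
    then obtain i j where ij: "i\<in>I" "j\<in>I" "i\<noteq>j" and a0: "a \<in> hseg (xs i) (xs j)"
      unfolding Del by blast
    have a: "a \<in> gseg hdist hyp_space (xs i) (xs j)" using a0 by (simp add: hseg_def)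
    obtain \<gamma>a s where ga: "geodesic_path hdist hyp_space \<gamma>a (xs i) (xs j)" "0 \<le> s" "s \<le> hdist (xs i) (xs j)" "a = \<gamma>a s"
      using gseg_E[OF a] by blast
    obtain \<gamma> where \<gamma>: "geodesic_path hdist hyp_space \<gamma> (xs i) (xs j)" "\<gamma> (g i) = os i j" using geo[OF ij] by blast
    have "a = \<gamma> s" using on_geo_is_gamma[OF \<gamma>(1) Xh[OF ij(1)] Xh[OF ij(2)] hgeo_on_geo[OF ga(1-3)]] ga(4) by simp
    show "\<exists>i\<in>I. \<exists>j\<in>I. i \<noteq> j \<and> a \<in> hseg (xs i) (os i j)"
    proof (cases "s \<le> g i")
      case True
      have "\<gamma> s \<in> gseg hdist hyp_space (xs i) (\<gamma> (g i))"
        using in_gseg[OF geo_restrict[OF \<gamma>(1) gnn[OF ij(1)] gleD[OF ij]], of s] True ga(2)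
          geo_dist(1)[OF \<gamma>(1) gnn[OF ij(1)] gleD[OF ij]] by simp
      hence "a \<in> hseg (xs i) (os i j)" using \<open>a = \<gamma> s\<close> \<gamma>(2) by (simp add: hseg_def)
      thus ?thesis using ij by blast
    next
      case False
      have r: "geodesic_path hdist hyp_space (\<lambda>v. \<gamma> (hdist (xs i) (xs j) - v)) (xs j) (\<gamma> (g i))"
        using geo_reverse_sub[OF \<gamma>(1) gnn[OF ij(1)] gleD[OF ij]] .
      have dj: "hdist (xs j) (\<gamma> (g i)) = hdist (xs i) (xs j) - g i"
        using geo_dist(2)[OF \<gamma>(1) gnn[OF ij(1)] gleD[OF ij]] by (simp add: hdist_sym)
      have r1: "0 \<le> hdist (xs i) (xs j) - s" "hdist (xs i) (xs j) - s \<le> hdist (xs j) (\<gamma> (g i))"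
        using False ga(3) dj by auto
      have m: "(\<lambda>v. \<gamma> (hdist (xs i) (xs j) - v)) (hdist (xs i) (xs j) - s) \<in> gseg hdist hyp_space (xs j) (\<gamma> (g i))"
        by (rule in_gseg[OF r r1])
      have e: "(\<lambda>v. \<gamma> (hdist (xs i) (xs j) - v)) (hdist (xs i) (xs j) - s) = a"
        using \<open>a = \<gamma> s\<close> by simp
      have am: "a \<in> gseg hdist hyp_space (xs j) (os i j)" using m unfolding e \<gamma>(2) .
      have oo: "os j i = os i j" using O[OF ij] by auto
      have aj: "a \<in> hseg (xs j) (os j i)" unfolding hseg_def oo by (rule am)
      show ?thesis by (rule bexI[of _ j], rule bexI[of _ i]) (use ij aj in auto)
    qed
  qed
  define Dt where "Dt = (\<lambda>i. dist (ps i) ob)"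
  have Dsum: "\<And>i j. i\<in>I \<Longrightarrow> j\<in>I \<Longrightarrow> i\<noteq>j \<Longrightarrow> Dt i + Dt j = dist (ps i) (ps j)"
  proof -
    fix i j assume ij: "i\<in>I" "j\<in>I" "i\<noteq>j"
    have "ob \<in> gseg dist T (ps i) (ps j)" using O[OF ij] by simp
    from gseg_dist(1)[OF this] show "Dt i + Dt j = dist (ps i) (ps j)" by (simp add: Dt_def dist_commute)
  qed
  have eD: "\<And>i. i\<in>I \<Longrightarrow> \<bar>Dt i - g i\<bar> \<le> E"
  proof -
    fix i assume i: "i \<in> I"
    then obtain j where j: "j\<in>I" "j\<noteq>i" using other by blast
    then obtain k where k: "k\<in>I" "k\<noteq>i" "k\<noteq>j" using third[OF i j(1)] by blast
    have p: "\<And>a b. a\<in>I \<Longrightarrow> b\<in>I \<Longrightarrow> a\<noteq>b \<Longrightarrow> -E \<le> (Dt a - g a) + (Dt b - g b) \<and> (Dt a - g a) + (Dt b - g b) \<le> 0"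
    proof -
      fix a b assume ab: "a\<in>I" "b\<in>I" "a\<noteq>b"
      show "-E \<le> (Dt a - g a) + (Dt b - g b) \<and> (Dt a - g a) + (Dt b - g b) \<le> 0"
        using Dsum[OF ab] gsum[OF ab] App[OF ab(1,2)] unfolding E_def by linarith
    qed
    have "-E \<le> (Dt i - g i) + (Dt j - g j)" "(Dt i - g i) + (Dt j - g j) \<le> 0" using p[of i j] i j by auto
    moreover have "-E \<le> (Dt i - g i) + (Dt k - g k)" "(Dt i - g i) + (Dt k - g k) \<le> 0" using p[of i k] i k by auto
    moreover have "-E \<le> (Dt j - g j) + (Dt k - g k)" "(Dt j - g j) + (Dt k - g k) \<le> 0" using p[of j k] j k by auto
    ultimately show "\<bar>Dt i - g i\<bar> \<le> E" using E0 by linarith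
  qed
  have R1: "\<And>i. i\<in>I \<Longrightarrow> g i = 0 \<Longrightarrow> Dt i = 0"
  proof -
    fix i assume i: "i\<in>I" and g0: "g i = 0"
    then obtain j where j: "j\<in>I" "j\<noteq>i" using other by blast
    have "xs i = os i j" using hdist_zero[OF Xh[OF i] osH[OF i j(1)]] O[OF i j(1)] j g0 by auto
    hence "ps i = ob" using X[OF i] O[OF i j(1)] j by auto
    thus "Dt i = 0" by (simp add: Dt_def)
  qed
  have inDel: "\<And>i j a. i\<in>I \<Longrightarrow> j\<in>I \<Longrightarrow> i\<noteq>j \<Longrightarrow> a \<in> hseg (xs i) (xs j) \<Longrightarrow> a \<in> Del"
  proof -
    fix i j a assume ij: "i\<in>I" "j\<in>I" "i\<noteq>j" and a: "a \<in> hseg (xs i) (xs j)"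
    have "j \<in> I - {i}" using ij by auto
    thus "a \<in> Del" unfolding Del using ij(1) a by blast
  qed
  have A0: "A0 = 2 * E + 2 * ln 3" by (simp add: A0_def E_def)
  have bound: "\<And>a b. a \<in> Del \<Longrightarrow> b \<in> Del \<Longrightarrow> \<bar>hdist a b - dist (pD a) (pD b)\<bar> \<le> A0"
  proof -
    fix a b assume aD: "a \<in> Del" and bD: "b \<in> Del"
    obtain i j where ij: "i\<in>I" "j\<in>I" "i\<noteq>j" and a: "a \<in> hseg (xs i) (os i j)" using legcover[OF aD] by blast
    obtain k l where kl: "k\<in>I" "l\<in>I" "k\<noteq>l" and b: "b \<in> hseg (xs k) (os k l)" using legcover[OF bD] by blast
    define t t' where "t = hdist (xs i) a" "t' = hdist (xs k) b"
    have La: "0 \<le> t" "t \<le> g i" "on_geo (xs i) (xs j) t a" "pD a \<in> gseg dist T (ps i) ob"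
      "dist (ps i) (pD a) = Dt i / g i * t"
      using legP[OF ij a] unfolding t_t'_def Dt_def by auto
    have Lb: "0 \<le> t'" "t' \<le> g k" "on_geo (xs k) (xs l) t' b" "pD b \<in> gseg dist T (ps k) ob"
      "dist (ps k) (pD b) = Dt k / g k * t'"
      using legP[OF kl b] unfolding t_t'_def Dt_def by auto
    have aH: "a \<in> hyp_space" "b \<in> hyp_space" using La(3) Lb(3) by (auto simp: on_geo_def)
    have psT: "ps i \<in> T" "ps k \<in> T" using X ij kl by auto
    show "\<bar>hdist a b - dist (pD a) (pD b)\<bar> \<le> A0"
    proof (cases "i = k")
      case True
      have tr: "dist (pD a) (pD b) = \<bar>Dt i / g i * t - Dt i / g i * t'\<bar>"
        using tree_same_seg[OF tree psT(1) obT La(4)] Lb(4) Lb(5) La(5) True by simp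
      have il: "i \<noteq> l" using True kl by simp
      obtain \<gamma> where \<gamma>: "geodesic_path hdist hyp_space \<gamma> (xs i) (xs l)" "\<gamma> (g i) = os i l"
        using geo[OF ij(1) kl(2) il] by blast
      have tl: "0 \<le> t" "t \<le> hdist (xs i) (xs l)" using La gleD[OF ij(1) kl(2) il] by auto
      define a' where "a' = \<gamma> t"
      have a'g: "on_geo (xs i) (xs l) t a'" unfolding a'_def by (rule hgeo_on_geo[OF \<gamma>(1) tl])
      have a'H: "a' \<in> hyp_space" using a'g by (simp add: on_geo_def)
      have g2: "2 * t \<le> hdist (xs i) (xs j) + hdist (xs i) (xs l) - hdist (xs j) (xs l)"
        using gle[OF ij(1) ij(2) kl(2) ij(3) il] La(2) by linarith
      have th: "hdist a a' \<le> ln 3"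
        by (rule thin[of "xs i" "xs j" "xs l" a a' t]) (use Xh ij kl aH a'H La(3) a'g La(1) g2 in \<open>auto simp: on_geo_def\<close>)
      have bg: "on_geo (xs i) (xs l) t' b" using Lb(3) True by simp
      have d2: "hdist a' b = \<bar>t - t'\<bar>" using on_geo_dist[OF \<gamma>(1) Xh[OF ij(1)] Xh[OF kl(2)] a'g bg] .
      have tri1: "hdist a b \<le> hdist a a' + hdist a' b" using hdist_triangle aH a'H by blast
      have tri2: "hdist a' b \<le> hdist a' a + hdist a b" using hdist_triangle aH a'H by blast
      have n1: "\<bar>\<bar>Dt i / g i * t - Dt i / g i * t'\<bar> - \<bar>t - t'\<bar>\<bar> \<le> \<bar>Dt i - g i\<bar>"
        using num1[of t "g i" t' "Dt i"] La(1,2) Lb(1,2) True R1[OF ij(1)] by simp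
      have e: "\<bar>Dt i - g i\<bar> \<le> E" using eD[OF ij(1)] .
      have "hdist a' a = hdist a a'" by (rule hdist_sym)
      hence "\<bar>hdist a b - \<bar>t - t'\<bar>\<bar> \<le> ln 3" using tri1 tri2 d2 th by linarith
      thus ?thesis using n1 e tr A0 E0 ln3 by linarith
    next
      case False
      have ki: "k \<noteq> i" using False by simp
      have obik: "ob \<in> gseg dist T (ps i) (ps k)" using O[OF ij(1) kl(1) False] by simp
      have tr: "dist (pD a) (pD b) = (Dt i - Dt i / g i * t) + (Dt k - Dt k / g k * t')"
        using tree_two_legs[OF tree psT obik La(4) Lb(4)] La(5) Lb(5) by (simp add: Dt_def)
      obtain \<gamma> where \<gamma>: "geodesic_path hdist hyp_space \<gamma> (xs i) (xs k)" "\<gamma> (g i) = os i k"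
        using geo[OF ij(1) kl(1) False] by blast
      obtain \<gamma>2 where \<gamma>2: "geodesic_path hdist hyp_space \<gamma>2 (xs k) (xs i)" "\<gamma>2 (g k) = os k i"
        using geo[OF kl(1) ij(1) ki] by blast
      have tl: "0 \<le> t" "t \<le> hdist (xs i) (xs k)" using La gleD[OF ij(1) kl(1) False] by auto
      have tl2: "0 \<le> t'" "t' \<le> hdist (xs k) (xs i)" using Lb gleD[OF kl(1) ij(1) ki] by auto
      define a' where "a' = \<gamma> t"
      define b' where "b' = \<gamma>2 t'"
      have a'g: "on_geo (xs i) (xs k) t a'" unfolding a'_def by (rule hgeo_on_geo[OF \<gamma>(1) tl])
      have b'g: "on_geo (xs k) (xs i) t' b'" unfolding b'_def by (rule hgeo_on_geo[OF \<gamma>2(1) tl2])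
      have a'H: "a' \<in> hyp_space" "b' \<in> hyp_space" using a'g b'g by (auto simp: on_geo_def)
      have g2: "2 * t \<le> hdist (xs i) (xs j) + hdist (xs i) (xs k) - hdist (xs j) (xs k)"
        using gle[OF ij(1) ij(2) kl(1) ij(3) False] La(2) by linarith
      have g3: "2 * t' \<le> hdist (xs k) (xs l) + hdist (xs k) (xs i) - hdist (xs l) (xs i)"
        using gle[OF kl(1) kl(2) ij(1) kl(3) ki] Lb(2) by linarith
      have th1: "hdist a a' \<le> ln 3"
        by (rule thin[of "xs i" "xs j" "xs k" a a' t]) (use Xh ij kl aH a'H La(3) a'g La(1) g2 in \<open>auto simp: on_geo_def\<close>)
      have th2: "hdist b b' \<le> ln 3"
        by (rule thin[of "xs k" "xs l" "xs i" b b' t']) (use Xh ij kl aH a'H Lb(3) b'g Lb(1) g3 in \<open>auto simp: on_geo_def\<close>)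
      have b'g2: "on_geo (xs i) (xs k) (hdist (xs k) (xs i) - t') b'"
        using on_geo_sym[OF Xh[OF kl(1)] Xh[OF ij(1)] b'g] .
      have d2: "hdist a' b' = \<bar>t - (hdist (xs k) (xs i) - t')\<bar>"
        using on_geo_dist[OF \<gamma>(1) Xh[OF ij(1)] Xh[OF kl(1)] a'g b'g2] .
      have gs: "g k + g i = hdist (xs k) (xs i)" using gsum[OF kl(1) ij(1) ki] .
      have d3: "hdist a' b' = (g i - t) + (g k - t')" using d2 gs La(2) Lb(2) by simp
      have tri1: "hdist a b \<le> hdist a a' + hdist a' b" using hdist_triangle aH a'H by blast
      have tri1': "hdist a' b \<le> hdist a' b' + hdist b' b" using hdist_triangle aH a'H by blast
      have tri2: "hdist a' b' \<le> hdist a' a + hdist a b'" using hdist_triangle aH a'H by blast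
      have tri2': "hdist a b' \<le> hdist a b + hdist b b'" using hdist_triangle aH a'H by blast
      have sy: "hdist a' a = hdist a a'" "hdist b' b = hdist b b'" by (rule hdist_sym)+
      have n1: "\<bar>(Dt i - Dt i / g i * t) - (g i - t)\<bar> \<le> \<bar>Dt i - g i\<bar>"
        using num2[of t "g i" "Dt i"] La(1,2) R1[OF ij(1)] by simp
      have n2: "\<bar>(Dt k - Dt k / g k * t') - (g k - t')\<bar> \<le> \<bar>Dt k - g k\<bar>"
        using num2[of t' "g k" "Dt k"] Lb(1,2) R1[OF kl(1)] by simp
      have e: "\<bar>Dt i - g i\<bar> \<le> E" "\<bar>Dt k - g k\<bar> \<le> E" using eD[OF ij(1)] eD[OF kl(1)] by auto
      have "\<bar>hdist a b - ((g i - t) + (g k - t'))\<bar> \<le> 2 * ln 3"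
        using tri1 tri1' tri2 tri2' sy th1 th2 d3 by linarith
      thus ?thesis using n1 n2 e tr A0 by linarith
    qed
  qed
  have surj: "\<And>y. y \<in> Tri \<Longrightarrow> \<exists>a\<in>Del. pD a = y"
  proof -
    fix y assume "y \<in> Tri"
    then obtain i j where ij: "i\<in>I" "j\<in>I" "i\<noteq>j" and y: "y \<in> gseg dist T (ps i) (ps j)" unfolding Tri by blast
    have obij: "ob \<in> gseg dist T (ps i) (ps j)" using O[OF ij] by simp
    have "y \<in> gseg dist T (ps i) ob \<or> y \<in> gseg dist T (ps j) ob"
      using tree_split[OF tree _ _ obij y] X ij by auto
    then obtain m where m: "m \<in> I" "y \<in> gseg dist T (ps m) ob" using ij by blast
    then obtain j' where j': "j' \<in> I" "j' \<noteq> m" using other by blast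
    have mj: "m \<noteq> j'" using j' by simp
    obtain \<gamma> where \<gamma>: "geodesic_path hdist hyp_space \<gamma> (xs m) (xs j')" "\<gamma> (g m) = os m j'"
      using geo[OF m(1) j'(1) mj] by blast
    have gmle: "g m \<le> hdist (xs m) (xs j')" using gleD[OF m(1) j'(1) mj] .
    have g0: "0 \<le> g m" using gnn[OF m(1)] .
    have u: "0 \<le> dist (ps m) y" "dist (ps m) y \<le> Dt m" using gseg_dist[OF m(2)] by (auto simp: Dt_def)
    show "\<exists>a\<in>Del. pD a = y"
    proof (cases "Dt m = 0")
      case True
      hence "y = ps m" using u by simp
      moreover have "xs m \<in> Del"
      proof -
        have "\<gamma> 0 \<in> hseg (xs m) (xs j')" unfolding hseg_def using in_gseg[OF \<gamma>(1), of 0] g0 gmle by simp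
        moreover have "\<gamma> 0 = xs m" using \<gamma>(1) unfolding geodesic_path_def by simp
        ultimately show ?thesis using inDel[OF m(1) j'(1) mj] by simp
      qed
      ultimately show ?thesis using X[OF m(1)] by (intro bexI[of _ "xs m"]) auto
    next
      case False
      have gm: "g m > 0" using R1[OF m(1)] False g0 by fastforce
      have "0 \<le> Dt m" using u by linarith
      hence Dp: "Dt m > 0" using False by simp
      define s where "s = dist (ps m) y * g m / Dt m"
      have s0: "0 \<le> s" using u gm Dp by (simp add: s_def)
      have s1: "s \<le> g m"
      proof -
        have "dist (ps m) y * g m \<le> Dt m * g m" using u gm by (simp add: mult_right_mono)
        thus ?thesis using Dp by (simp add: s_def divide_le_eq mult.commute)
      qed
      have aL: "\<gamma> s \<in> hseg (xs m) (os m j')"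
      proof -
        have "\<gamma> s \<in> gseg hdist hyp_space (xs m) (\<gamma> (g m))"
          using in_gseg[OF geo_restrict[OF \<gamma>(1) g0 gmle], of s] s0 s1 geo_dist(1)[OF \<gamma>(1) g0 gmle] by simp
        thus ?thesis unfolding hseg_def \<gamma>(2) .
      qed
      have aD: "\<gamma> s \<in> Del"
      proof -
        have "\<gamma> s \<in> hseg (xs m) (xs j')" unfolding hseg_def using in_gseg[OF \<gamma>(1), of s] s0 s1 gmle by simp
        thus ?thesis using inDel[OF m(1) j'(1) mj] by simp
      qed
      have lp: "pD (\<gamma> s) \<in> gseg dist T (ps m) ob" "dist (ps m) (pD (\<gamma> s)) = Dt m / g m * hdist (xs m) (\<gamma> s)"
        using legP[OF m(1) j'(1) mj aL] by (auto simp: Dt_def)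
      have hs: "hdist (xs m) (\<gamma> s) = s" using geo_dist(1)[OF \<gamma>(1) s0] s1 gmle by simp
      have "dist (ps m) (pD (\<gamma> s)) = dist (ps m) y" using lp(2) hs gm Dp by (simp add: s_def)
      hence "dist y (pD (\<gamma> s)) = 0" using tree_same_seg[OF tree _ obT m(2) lp(1)] X[OF m(1)] by simp
      hence "pD (\<gamma> s) = y" by simp
      thus ?thesis using aD by blast
    qed
  qed
  define gi where "gi = (\<lambda>y. SOME a. a \<in> Del \<and> pD a = y)"
  have gi: "\<And>y. y \<in> Tri \<Longrightarrow> gi y \<in> Del \<and> pD (gi y) = y"
  proof -
    fix y assume "y \<in> Tri"
    hence "\<exists>a. a \<in> Del \<and> pD a = y" using surj by blast
    thus "gi y \<in> Del \<and> pD (gi y) = y" unfolding gi_def by (rule someI_ex)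
  qed
  have A0nn: "0 \<le> A0" using A0 E0 ln3 by simp
  have b2: "\<And>a b. a \<in> Del \<Longrightarrow> b \<in> Del \<Longrightarrow> - A0 + hdist a b / 1 \<le> dist (pD a) (pD b) \<and> dist (pD a) (pD b) \<le> 1 * hdist a b + A0"
  proof -
    fix a b assume "a \<in> Del" "b \<in> Del"
    from bound[OF this] show "- A0 + hdist a b / 1 \<le> dist (pD a) (pD b) \<and> dist (pD a) (pD b) \<le> 1 * hdist a b + A0"
      by (simp add: abs_le_iff)
  qed
  have "quasi_isometry hdist Del dist Tri pD 1 A0"
    unfolding quasi_isometry_def
  proof (intro conjI ballI exI[of _ gi])
    show "pD ` Del \<subseteq> Tri" by (rule img)
    show "gi ` Tri \<subseteq> Del" using gi by blast
    fix a b assume "a \<in> Del" "b \<in> Del"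
    from b2[OF this] show "- A0 + hdist a b / 1 \<le> dist (pD a) (pD b)" "dist (pD a) (pD b) \<le> 1 * hdist a b + A0" by auto
  next
    fix y y' assume yy: "y \<in> Tri" "y' \<in> Tri"
    have "\<bar>hdist (gi y) (gi y') - dist (pD (gi y)) (pD (gi y'))\<bar> \<le> A0" using bound gi yy by blast
    hence "\<bar>hdist (gi y) (gi y') - dist y y'\<bar> \<le> A0" using gi yy by simp
    thus "- A0 + dist y y' / 1 \<le> hdist (gi y) (gi y')" "hdist (gi y) (gi y') \<le> 1 * dist y y' + A0"
      by (simp_all add: abs_le_iff)
  next
    fix a assume a: "a \<in> Del"
    have y: "pD a \<in> Tri" using img a by blast
    have "\<bar>hdist a (gi (pD a)) - dist (pD a) (pD (gi (pD a)))\<bar> \<le> A0" using bound[OF a] gi[OF y] by blast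
    thus "hdist a (gi (pD a)) \<le> A0" using gi[OF y] by simp
  next
    fix y assume "y \<in> Tri"
    thus "dist y (pD (gi y)) \<le> A0" using gi A0nn by simp
  qed
  thus ?thesis by (simp add: A0_def)
qed



lemma hseg_sym_eq: "hseg a b = hseg b a"
  unfolding hseg_def using gseg_sym[of _ hdist hyp_space a b] gseg_sym[of _ hdist hyp_space b a]
  by (auto simp: hdist_sym)

lemma tseg_sym_eq: "gseg dist T a b = gseg dist T b a"
  using gseg_sym[of _ dist T a b] gseg_sym[of _ dist T b a] by (auto simp: dist_commute)

theorem mainTheorem6:
  fixes X :: "(real^'n) set" and c :: real
    and T :: "'b::metric_space set" and V :: "'b set" and p :: "real^'n \<Rightarrow> 'b"
    and x1 x2 x3 o12 o23 o13 :: "real^'n"and ob :: 'b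
    and pD :: "real^'n \<Rightarrow> 'b"
  assumes "finite X" "X \<subseteq> hyp_space" "c > 0" "real (card X) \<le> 2 powr c + 2"
    and "gromov_approx_tree c X T V p"
    and "x1 \<in> X" "x2 \<in> X" "x3 \<in> X"
    and "ob \<in> gseg dist T (p x1) (p x2) \<inter> gseg dist T (p x2) (p x3) \<inter> gseg dist T (p x1) (p x3)"
    and "o12 \<in> hseg x1 x2" "hdist x1 o12 = (hdist x1 x2 + hdist x1 x3 - hdist x2 x3) / 2"
    and "o23 \<in> hseg x2 x3" "hdist x2 o23 = (hdist x2 x3 + hdist x2 x1 - hdist x3 x1) / 2"
    and "o13 \<in> hseg x1 x3" "hdist x1 o13 = (hdist x1 x3 + hdist x1 x2 - hdist x3 x2) / 2"
    and "pD ` geod_triangle x1 x2 x3 \<subseteq> tripod T (p x1) (p x2) (p x3)"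
    and "pD x1 = p x1" "pD x2 = p x2" "pD x3 = p x3"
    and "pD o12 = ob" "pD o23 = ob" "pD o13 = ob"
    and "dilation_on_seg pD T x1 o12 (p x1) ob" "dilation_on_seg pD T x2 o12 (p x2) ob"
    and "dilation_on_seg pD T x2 o23 (p x2) ob" "dilation_on_seg pD T x3 o23 (p x3) ob"
    and "dilation_on_seg pD T x1 o13 (p x1) ob" "dilation_on_seg pD T x3 o13 (p x3) ob"
  shows "quasi_isometry hdist (geod_triangle x1 x2 x3) dist (tripod T (p x1) (p x2) (p x3))
           pD 1 (4 * c * ln 3 + 2 * ln 3)"
proof -
  note a = assms
  define I :: "nat set" where "I = {0,1,2}"
  define xs where "xs = (\<lambda>i::nat. if i = 0 then x1 else if i = 1 then x2 else x3)"
  define os where "os = (\<lambda>(i::nat) (j::nat). if (i = 0 \<and> j = 1) \<or> (i = 1 \<and> j = 0) then o12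
      else if (i = 1 \<and> j = 2) \<or> (i = 2 \<and> j = 1) then o23 else o13)"
  define ps where "ps = (\<lambda>i. p (xs i))"
  define g where "g = (\<lambda>i::nat. if i = 0 then (hdist x1 x2 + hdist x1 x3 - hdist x2 x3) / 2
      else if i = 1 then (hdist x1 x2 + hdist x2 x3 - hdist x1 x3) / 2
      else (hdist x1 x3 + hdist x2 x3 - hdist x1 x2) / 2)"
  have gat: "finite_metric_tree T V" "p ` X \<subseteq> V"
    "\<forall>x1\<in>X. \<forall>x2\<in>X. hdist x1 x2 - 2 * c * ln 3 \<le> dist (p x1) (p x2) \<and> dist (p x1) (p x2) \<le> hdist x1 x2"
    using a(5) unfolding gromov_approx_tree_def by auto
  have tree: "real_tree T" "V \<subseteq> T" using gat(1) unfolding finite_metric_tree_def by auto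
  have pT: "p x1 \<in> T" "p x2 \<in> T" "p x3 \<in> T" using gat(2) tree(2) a(6-8) by auto
  have xH: "x1 \<in> hyp_space" "x2 \<in> hyp_space" "x3 \<in> hyp_space" using a(2,6-8) by auto
  have s12: "hdist x2 x1 = hdist x1 x2" "hdist x3 x1 = hdist x1 x3" "hdist x3 x2 = hdist x2 x3" by (rule hdist_sym)+
  have d21: "hdist x2 o12 = hdist x1 x2 - hdist x1 o12" using gseg_dist(1)[of o12 hdist hyp_space x1 x2] a(10)
    by (simp add: hseg_def hdist_sym)
  have d32: "hdist x3 o23 = hdist x2 x3 - hdist x2 o23" using gseg_dist(1)[of o23 hdist hyp_space x2 x3] a(12)
    by (simp add: hseg_def hdist_sym)
  have d31: "hdist x3 o13 = hdist x1 x3 - hdist x1 o13" using gseg_dist(1)[of o13 hdist hyp_space x1 x3] a(14)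
    by (simp add: hseg_def hdist_sym)
  have gv: "g 0 = (hdist x1 x2 + hdist x1 x3 - hdist x2 x3) / 2" "g 1 = (hdist x1 x2 + hdist x2 x3 - hdist x1 x3) / 2"
     "g 2 = (hdist x1 x3 + hdist x2 x3 - hdist x1 x2) / 2" by (simp_all add: g_def)
  have hv: "hdist x1 o12 = g 0" "hdist x2 o12 = g 1" "hdist x2 o23 = g 1" "hdist x3 o23 = g 2"
      "hdist x1 o13 = g 0" "hdist x3 o13 = g 2"
    using a(11,13,15) d21 d32 d31 s12 gv by (auto simp: field_simps)
  have hs: "o12 \<in> hseg x1 x2" "o12 \<in> hseg x2 x1" "o23 \<in> hseg x2 x3" "o23 \<in> hseg x3 x2"
      "o13 \<in> hseg x1 x3" "o13 \<in> hseg x3 x1" using a(10,12,14) hseg_sym_eq by auto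
  have obs: "ob \<in> gseg dist T (p x1) (p x2)" "ob \<in> gseg dist T (p x2) (p x1)"
      "ob \<in> gseg dist T (p x2) (p x3)" "ob \<in> gseg dist T (p x3) (p x2)"
      "ob \<in> gseg dist T (p x1) (p x3)" "ob \<in> gseg dist T (p x3) (p x1)"
    using a(9) tseg_sym_eq by auto
  have pairs: "\<And>i j. i\<in>I \<Longrightarrow> j\<in>I \<Longrightarrow> i\<noteq>j \<Longrightarrow> (i=0\<and>j=1) \<or> (i=1\<and>j=0) \<or> (i=0\<and>j=2) \<or> (i=2\<and>j=0) \<or> (i=1\<and>j=2) \<or> (i=2\<and>j=1)"
    by (auto simp: I_def)
  have DelEq: "(\<Union>i\<in>I. \<Union>j\<in>I-{i}. hseg (xs i) (xs j)) = geod_triangle x1 x2 x3"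
    unfolding I_def geod_triangle_def
    by (auto simp: xs_def hseg_sym_eq[of x2 x1] hseg_sym_eq[of x3 x1] hseg_sym_eq[of x3 x2])
  have TriEq: "(\<Union>i\<in>I. \<Union>j\<in>I-{i}. gseg dist T (ps i) (ps j)) = tripod T (p x1) (p x2) (p x3)"
    unfolding I_def tripod_def
    by (auto simp: xs_def ps_def tseg_sym_eq[of T "p x2" "p x1"] tseg_sym_eq[of T "p x3" "p x1"] tseg_sym_eq[of T "p x3" "p x2"])
  have Q: "quasi_isometry hdist (\<Union>i\<in>I. \<Union>j\<in>I-{i}. hseg (xs i) (xs j)) dist (\<Union>i\<in>I. \<Union>j\<in>I-{i}. gseg dist T (ps i) (ps j))
           pD 1 (4 * c * ln 3 + 2 * ln 3)"
  proof (rule core[OF I_def])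
    show "0 \<le> c" using a(3) by simp
    show "real_tree T" by (rule tree(1))
    show "\<And>i. i \<in> I \<Longrightarrow> xs i \<in> hyp_space \<and> pD (xs i) = ps i \<and> ps i \<in> T"
      using xH pT a(17-19) by (auto simp: I_def xs_def ps_def)
    show "\<And>i j. i \<in> I \<Longrightarrow> j \<in> I \<Longrightarrow> i \<noteq> j \<Longrightarrow> os i j \<in> hseg (xs i) (xs j) \<and> os j i = os i j \<and>
             hdist (xs i) (os i j) = g i \<and> dilation_on_seg pD T (xs i) (os i j) (ps i) ob \<and>
             pD (os i j) = ob \<and> ob \<in> gseg dist T (ps i) (ps j)"
    proof -
      fix i j assume ij: "i \<in> I" "j \<in> I" "i \<noteq> j"
      from pairs[OF ij] show "os i j \<in> hseg (xs i) (xs j) \<and> os j i = os i j \<and>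
             hdist (xs i) (os i j) = g i \<and> dilation_on_seg pD T (xs i) (os i j) (ps i) ob \<and>
             pD (os i j) = ob \<and> ob \<in> gseg dist T (ps i) (ps j)"
        using hs hv obs a(20-28) by (elim disjE) (auto simp: os_def xs_def ps_def)
    qed
    show "\<And>i j k. i\<in>I \<Longrightarrow> j\<in>I \<Longrightarrow> k\<in>I \<Longrightarrow> i\<noteq>j \<Longrightarrow> i\<noteq>k \<Longrightarrow> j\<noteq>k \<Longrightarrow>
             2 * g i = hdist (xs i) (xs j) + hdist (xs i) (xs k) - hdist (xs j) (xs k)"
      unfolding I_def using s12 gv by (auto simp: xs_def)
    show "\<And>i j. i\<in>I \<Longrightarrow> j\<in>I \<Longrightarrow> hdist (xs i) (xs j) - 2*c*ln 3 \<le> dist (ps i) (ps j) \<and> dist (ps i) (ps j) \<le> hdist (xs i) (xs j)"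
    proof -
      fix i j assume ij: "i \<in> I" "j \<in> I"
      have "xs i \<in> X" "xs j \<in> X" using ij a(6-8) by (auto simp: I_def xs_def)
      thus "hdist (xs i) (xs j) - 2*c*ln 3 \<le> dist (ps i) (ps j) \<and> dist (ps i) (ps j) \<le> hdist (xs i) (xs j)"
        using gat(3) by (simp add: ps_def)
    qed
    show "pD ` (\<Union>i\<in>I. \<Union>j\<in>I-{i}. hseg (xs i) (xs j)) \<subseteq> (\<Union>i\<in>I. \<Union>j\<in>I-{i}. gseg dist T (ps i) (ps j))"
      unfolding DelEq TriEq by (rule a(16))
  qed (rule refl)+
  thus ?thesis unfolding DelEq TriEq .
qed


end
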